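(* Let $n\ge1$. Let $F:\mathbb{R}\times(\mathbb{R}^n\setminus\{0\})\to[0,\infty)$ satisfy $F(t,x)=F(-t,x)=F(-t,-x)$ and be convex in $t$: $F(\lambda t+(1-\lambda)\tau,x)\le\lambda F(t,x)+(1-\lambda)F(\tau,x)$ for all $\lambda\in(0,1)$, $t,\tau\in\mathbb{R}$ and a.e. $x$. Let $W:\mathbb{R}\to[0,\infty)$ with $W\in L^\infty(\mathbb{R})\cap C^1(\mathbb{R})$. Let $\Omega\subset\mathbb{R}^n$ be measurable and $u,v:\mathbb{R}^n\to\mathbb{R}$ measurable, and set $m=\min\{u,v\}$, $M=\max\{u,v\}$. Then $$\mathcal{E}(m,\Omega)+\mathcal{E}(M,\Omega)\le\mathcal{E}(u,\Omega)+\mathcal{E}(v,\Omega).$$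
   Context: For a measurable set $\Omega\subset\mathbb{R}^n$ with complement $\mathcal{C}\Omega=\mathbb{R}^n\setminus\Omega$ and measurable $w:\mathbb{R}^n\to\mathbb{R}$, $\mathcal{E}(w,\Omega)=\iint_{\mathbb{R}^{2n}\setminus(\mathcal{C}\Omega)^2}F(w(x)-w(y),x-y)\,dx\,dy+\int_\Omega W(w)\,dx\in[0,\infty]$. *)

theory Defs
  imports "HOL-Analysis.Analysis"
begin

text \<open>Nonlocal energy E(w,Omega) on R^n, modelled by a Euclidean space 'a
  (dimension DIM('a) >= 1).\<close>

definition energy ::
  "(real \<Rightarrow> 'a::euclidean_space \<Rightarrow> real) \<Rightarrow> (real \<Rightarrow> real) \<Rightarrow> ('a \<Rightarrow> real) \<Rightarrow> 'a set \<Rightarrow> ennreal"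
where
  "energy F W w \<Omega> =
     (\<integral>\<^sup>+ p. indicator (UNIV - ((UNIV - \<Omega>) \<times> (UNIV - \<Omega>))) p
              * ennreal (F (w (fst p) - w (snd p)) (fst p - snd p)) \<partial>lebesgue)
   + (\<integral>\<^sup>+ x. indicator \<Omega> x * ennreal (W (w x)) \<partial>lebesgue)"

end

theory Submission
  imports Defs
begin


lemma fst_leb: "fst \<in> measurable (lebesgue :: ('a::euclidean_space \<times> 'b::euclidean_space) measure) (lebesgue::'a measure)"
proof (rule measurableI)
  fix A :: "'a set" assume "A \<in> sets lebesgue"
  then obtain S N N' where A: "A = S \<union> N" "N \<subseteq> N'" "N' \<in> null_sets lborel" "S \<in> sets lborel"
    by (rule sets_completionE)
  have e: "fst -` A \<inter> space (lebesgue::('a\<times>'b) measure) = S \<times> (UNIV::'b set) \<union> N \<times> UNIV" using A by auto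
  have 1: "N' \<times> (UNIV::'b set) \<in> null_sets (lborel::('a\<times>'b) measure)"
    using lborel.times_in_null_sets1[of N' lborel UNIV] A(3) by (simp add: lborel_prod)
  have 2: "S \<times> (UNIV::'b set) \<in> sets (lborel::('a\<times>'b) measure)"
  proof -
    have "fst \<in> borel_measurable (borel::('a\<times>'b) measure)" by (intro borel_measurable_continuous_onI continuous_intros)
    from measurable_sets[OF this, of S] A(4) have "{x. fst x \<in> S} \<in> sets (borel::('a\<times>'b) measure)" by (simp add: vimage_def)
    moreover have "S \<times> UNIV = {x. fst x \<in> S}" by auto
    ultimately show ?thesis by (metis sets_lborel)
  qed
  show "fst -` A \<inter> space (lebesgue::('a\<times>'b) measure) \<in> sets (lebesgue::('a\<times>'b) measure)"
    unfolding e by (rule sets_completionI[of _ "S \<times> (UNIV::'b set)" "N \<times> (UNIV::'b set)" "N' \<times> (UNIV::'b set)" "lborel::('a\<times>'b) measure"])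
      (simp, use A(2) in blast, rule 1, rule 2)
qed auto

lemma snd_leb: "snd \<in> measurable (lebesgue :: ('a::euclidean_space \<times> 'b::euclidean_space) measure) (lebesgue::'b measure)"
proof (rule measurableI)
  fix A :: "'b set" assume "A \<in> sets lebesgue"
  then obtain S N N' where A: "A = S \<union> N" "N \<subseteq> N'" "N' \<in> null_sets lborel" "S \<in> sets lborel"
    by (rule sets_completionE)
  have e: "snd -` A \<inter> space (lebesgue::('a\<times>'b) measure) = (UNIV::'a set) \<times> S \<union> UNIV \<times> N" using A by auto
  have 1: "(UNIV::'a set) \<times> N' \<in> null_sets (lborel::('a\<times>'b) measure)"
    using lborel.times_in_null_sets2[of UNIV lborel N'] A(3) by (simp add: lborel_prod)
  have 2: "(UNIV::'a set) \<times> S \<in> sets (lborel::('a\<times>'b) measure)"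
  proof -
    have "snd \<in> borel_measurable (borel::('a\<times>'b) measure)" by (intro borel_measurable_continuous_onI continuous_intros)
    from measurable_sets[OF this, of S] A(4) have "{x. snd x \<in> S} \<in> sets (borel::('a\<times>'b) measure)" by (simp add: vimage_def)
    moreover have "UNIV \<times> S = {x. snd x \<in> S}" by auto
    ultimately show ?thesis by (metis sets_lborel)
  qed
  show "snd -` A \<inter> space (lebesgue::('a\<times>'b) measure) \<in> sets (lebesgue::('a\<times>'b) measure)"
    unfolding e by (rule sets_completionI[of _ "(UNIV::'a set) \<times> S" "(UNIV::'a set) \<times> N" "(UNIV::'a set) \<times> N'" "lborel::('a\<times>'b) measure"])
      (simp, use A(2) in blast, rule 1, rule 2)
qed auto

lemma diff_null:
  assumes "N \<in> null_sets (lebesgue::'a::euclidean_space measure)"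
  shows "{p::'a\<times>'a. fst p - snd p \<in> N} \<in> null_sets lebesgue"
proof -
  obtain N' where N': "N' \<in> null_sets (lborel::'a measure)" "N \<subseteq> N'"
    using assms unfolding null_sets_completion_iff2 by auto
  define S where "S = {p::'a\<times>'a. fst p - snd p \<in> N'}"
  have Sb: "S \<in> sets (lborel \<Otimes>\<^sub>M lborel)"
  proof -
    have "(\<lambda>p::'a\<times>'a. fst p - snd p) \<in> borel_measurable borel" by (intro borel_measurable_continuous_onI continuous_intros)
    moreover have "N' \<in> sets borel" using N'(1) unfolding null_sets_def by simp
    ultimately have "(\<lambda>p::'a\<times>'a. fst p - snd p) -` N' \<inter> space borel \<in> sets borel"
      by (rule measurable_sets)
    then show ?thesis unfolding S_def lborel_prod by (simp add: vimage_def)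
  qed
  have "emeasure (lborel \<Otimes>\<^sub>M lborel) S = (\<integral>\<^sup>+y. emeasure lborel ((\<lambda>x. (x, y)) -` S) \<partial>lborel)"
    by (rule lborel_pair.emeasure_pair_measure_alt2[OF Sb])
  also have "\<dots> = 0"
  proof -
    have pw: "emeasure lborel ((\<lambda>x. (x, y)) -` S) = 0" for y :: 'a
    proof -
      have "(\<lambda>x. (x, y)) -` S = (+) (-y) -` N' \<inter> space lborel" by (auto simp: S_def)
      then have "emeasure lborel ((\<lambda>x. (x, y)) -` S) = emeasure (distr lborel borel ((+) (-y))) N'"
        using N' by (subst emeasure_distr) auto
      also have "\<dots> = 0" using N' by (simp add: lborel_distr_plus null_sets_def)
      finally show ?thesis .
    qed
    show ?thesis by (simp add: pw)
  qed
  finally have "S \<in> null_sets (lborel::('a\<times>'a) measure)"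
    using Sb unfolding lborel_prod null_sets_def by simp
  moreover have "{p::'a\<times>'a. fst p - snd p \<in> N} \<subseteq> S" using N'(2) unfolding S_def by auto
  ultimately show ?thesis unfolding null_sets_completion_iff2 by (intro bexI[of _ S])
qed

lemma conv_aux:
  fixes f :: "real \<Rightarrow> real"
  assumes conv: "\<forall>l\<in>{0<..<1}. \<forall>t \<tau>. f (l*t+(1-l)*\<tau>) \<le> l*f t + (1-l)*f \<tau>"
    and bc: "b < c" and ca: "c < a"
  shows "f c + f (a+b-c) \<le> f a + f b"
proof -
  define l where "l = (c-b)/(a-b)"
  have l0: "0 < l" "l < 1" using bc ca by (auto simp: l_def field_simps)
  have "l*(a-b) = c-b" using bc ca by (simp add: l_def)
  then have c: "c = l*a+(1-l)*b" by (simp add: algebra_simps)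
  have c2: "a+b-c = (1-l)*a+(1-(1-l))*b" using c by (simp add: algebra_simps)
  have "f c \<le> l*f a + (1-l)*f b" using conv l0 c by auto
  moreover have "f (a+b-c) \<le> (1-l)*f a + (1-(1-l))*f b"
  proof -
    have "1-l \<in> {0<..<1}" using l0 by auto
    from conv[rule_format, OF this, of a b] show ?thesis unfolding c2 .
  qed
  ultimately show ?thesis by (simp add: algebra_simps)
qed

lemma conv_pair:
  fixes f :: "real \<Rightarrow> real"
  assumes conv: "\<forall>l\<in>{0<..<1}. \<forall>t \<tau>. f (l*t+(1-l)*\<tau>) \<le> l*f t + (1-l)*f \<tau>"
    and "min a b \<le> c" "c \<le> max a b"
  shows "f c + f (a+b-c) \<le> f a + f b"
proof -
  consider "c = a" | "c = b" | "b < c" "c < a" | "a < c" "c < b" using assms(2,3) by linarith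
  then show ?thesis
  proof cases
    case 3 then show ?thesis using conv_aux[OF conv] by blast
  next
    case 4 then show ?thesis using conv_aux[OF conv, of a c b] by (simp add: add.commute)
  qed auto
qed

lemma minmax_between:
  fixes ux uy vx vy :: real
  shows "min (ux-uy) (vx-vy) \<le> min ux vx - min uy vy \<and> min ux vx - min uy vy \<le> max (ux-uy) (vx-vy)
     \<and> max ux vx - max uy vy = (ux-uy) + (vx-vy) - (min ux vx - min uy vy)"
  by (auto simp: min_def max_def)

theorem lemma10:
  fixes F :: "real \<Rightarrow> 'a::euclidean_space \<Rightarrow> real"
    and W :: "real \<Rightarrow> real"
    and \<Omega> :: "'a set"
    and u v :: "'a \<Rightarrow> real"
  assumes F_meas: "(\<lambda>(t, x). F t x) \<in> borel_measurable borel"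
    and F_nonneg: "\<And>t x. x \<noteq> 0 \<Longrightarrow> F t x \<ge> 0"
    and F_sym1: "\<And>t x. x \<noteq> 0 \<Longrightarrow> F t x = F (-t) x"
    and F_sym2: "\<And>t x. x \<noteq> 0 \<Longrightarrow> F (-t) x = F (-t) (-x)"
    and F_conv: "AE x in lebesgue. \<forall>l\<in>{0<..<1}. \<forall>t \<tau>.
                   F (l * t + (1 - l) * \<tau>) x \<le> l * F t x + (1 - l) * F \<tau> x"
    and W_nonneg: "\<And>t. W t \<ge> 0"
    and W_Linf: "W \<in> borel_measurable lebesgue" "\<exists>C. AE t in lebesgue. \<bar>W t\<bar> \<le> C"
    and W_C1: "\<exists>W'. (\<forall>t. (W has_real_derivative W' t) (at t)) \<and> continuous_on UNIV W'"
    and \<Omega>_meas: "\<Omega> \<in> sets lebesgue"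
    and u_meas: "u \<in> borel_measurable lebesgue"
    and v_meas: "v \<in> borel_measurable lebesgue"
  shows "energy F W (\<lambda>x. min (u x) (v x)) \<Omega> + energy F W (\<lambda>x. max (u x) (v x)) \<Omega>
         \<le> energy F W u \<Omega> + energy F W v \<Omega>"
proof -
  define D where "D = (UNIV::('a\<times>'a) set) - ((UNIV - \<Omega>) \<times> (UNIV - \<Omega>))"
  define f where "f w p = indicator D p * ennreal (F (w (fst p) - w (snd p)) (fst p - snd p))" for w and p :: "'a\<times>'a"
  define g where "g w x = indicator \<Omega> x * ennreal (W (w x))" for w and x :: 'a
  have E: "energy F W w \<Omega> = integral\<^sup>N lebesgue (f w) + integral\<^sup>N lebesgue (g w)" for w
    unfolding energy_def f_def g_def D_def by simp
  have Dm: "D \<in> sets lebesgue"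
  proof -
    have "D = (fst -` \<Omega> \<inter> space lebesgue) \<union> (snd -` \<Omega> \<inter> space lebesgue)" by (auto simp: D_def)
    then show ?thesis using measurable_sets[OF fst_leb \<Omega>_meas] measurable_sets[OF snd_leb \<Omega>_meas] by auto
  qed
  have Wc: "continuous_on UNIV W"
    using W_C1 by (metis DERIV_isCont continuous_at_imp_continuous_on)
  have Wb: "W \<in> borel_measurable borel" using Wc by (rule borel_measurable_continuous_onI)
  have fm: "f w \<in> borel_measurable lebesgue" if w: "w \<in> borel_measurable lebesgue" for w
  proof -
    have a: "(\<lambda>p::'a\<times>'a. w (fst p) - w (snd p)) \<in> borel_measurable lebesgue"
      using measurable_compose[OF fst_leb w] measurable_compose[OF snd_leb w] by (intro borel_measurable_diff) auto
    have b: "(\<lambda>p::'a\<times>'a. fst p - snd p) \<in> borel_measurable lebesgue"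
      by (rule measurable_completion[of _ lborel]) (simp, intro borel_measurable_continuous_onI continuous_intros)
    have "(\<lambda>p::'a\<times>'a. (w (fst p) - w (snd p), fst p - snd p)) \<in> borel_measurable lebesgue"
      using a b by (rule borel_measurable_Pair)
    from measurable_compose[OF this F_meas]
    have "(\<lambda>p::'a\<times>'a. F (w (fst p) - w (snd p)) (fst p - snd p)) \<in> borel_measurable lebesgue" by simp
    then show ?thesis unfolding f_def using Dm by measurable
  qed
  have gm: "g w \<in> borel_measurable lebesgue" if w: "w \<in> borel_measurable lebesgue" for w
  proof -
    have "(\<lambda>x. W (w x)) \<in> borel_measurable lebesgue" using measurable_compose[OF w Wb] .
    then show ?thesis unfolding g_def using \<Omega>_meas by measurable
  qed
  have mm: "(\<lambda>x. min (u x) (v x)) \<in> borel_measurable lebesgue" "(\<lambda>x. max (u x) (v x)) \<in> borel_measurable lebesgue"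
    using u_meas v_meas by auto
  define bad where "bad = {z::'a. \<not> (\<forall>l\<in>{0<..<1}. \<forall>t \<tau>. F (l * t + (1 - l) * \<tau>) z \<le> l * F t z + (1 - l) * F \<tau> z)}"
  obtain N where N: "N \<in> null_sets lebesgue" "bad \<subseteq> N"
    using F_conv unfolding eventually_ae_filter bad_def by auto
  have AEp: "AE p in lebesgue. fst p - snd p \<notin> N"
    using diff_null[OF N(1)] unfolding eventually_ae_filter by (intro bexI[of _ "{p. fst p - snd p \<in> N}"]) auto
  have pf: "AE p in lebesgue. f (\<lambda>x. min (u x) (v x)) p + f (\<lambda>x. max (u x) (v x)) p \<le> f u p + f v p"
    using AEp
  proof eventually_elim
    case (elim p)
    obtain x y where p: "p = (x, y)" by (cases p)
    show ?case
    proof (cases "x = y")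
      case True then show ?thesis by (simp add: f_def p)
    next
      case False
      then have z: "x - y \<noteq> 0" by simp
      have cv: "\<forall>l\<in>{0<..<1}. \<forall>t \<tau>. F (l * t + (1 - l) * \<tau>) (x-y) \<le> l * F t (x-y) + (1 - l) * F \<tau> (x-y)"
        using elim N(2) unfolding bad_def p by auto
      note mb = minmax_between[of "u x" "u y" "v x" "v y"]
      have "F (min (u x) (v x) - min (u y) (v y)) (x-y) + F (max (u x) (v x) - max (u y) (v y)) (x-y)
          \<le> F (u x - u y) (x-y) + F (v x - v y) (x-y)"
        using conv_pair[OF cv] mb by (simp only:) 
      then have "ennreal (F (min (u x) (v x) - min (u y) (v y)) (x-y)) + ennreal (F (max (u x) (v x) - max (u y) (v y)) (x-y))
          \<le> ennreal (F (u x - u y) (x-y)) + ennreal (F (v x - v y) (x-y))"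
        using F_nonneg[OF z] by (simp add: ennreal_plus[symmetric] del: ennreal_plus)
      then show ?thesis unfolding f_def p
        by (cases "(x,y) \<in> D") (auto simp: distrib_left[symmetric])
    qed
  qed
  have pg: "g (\<lambda>x. min (u x) (v x)) x + g (\<lambda>x. max (u x) (v x)) x = g u x + g v x" for x
    unfolding g_def by (cases "u x \<le> v x") (auto simp: min_def max_def add.commute)
  have "integral\<^sup>N lebesgue (f (\<lambda>x. min (u x) (v x))) + integral\<^sup>N lebesgue (f (\<lambda>x. max (u x) (v x)))
      = (\<integral>\<^sup>+p. f (\<lambda>x. min (u x) (v x)) p + f (\<lambda>x. max (u x) (v x)) p \<partial>lebesgue)"
    using fm[OF mm(1)] fm[OF mm(2)] by (simp add: nn_integral_add)
  also have "\<dots> \<le> (\<integral>\<^sup>+p. f u p + f v p \<partial>lebesgue)" using pf by (rule nn_integral_mono_AE)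
  also have "\<dots> = integral\<^sup>N lebesgue (f u) + integral\<^sup>N lebesgue (f v)"
    using fm[OF u_meas] fm[OF v_meas] by (simp add: nn_integral_add)
  finally have I1: "integral\<^sup>N lebesgue (f (\<lambda>x. min (u x) (v x))) + integral\<^sup>N lebesgue (f (\<lambda>x. max (u x) (v x)))
      \<le> integral\<^sup>N lebesgue (f u) + integral\<^sup>N lebesgue (f v)" .
  have "integral\<^sup>N lebesgue (g (\<lambda>x. min (u x) (v x))) + integral\<^sup>N lebesgue (g (\<lambda>x. max (u x) (v x)))
      = (\<integral>\<^sup>+x. g (\<lambda>x. min (u x) (v x)) x + g (\<lambda>x. max (u x) (v x)) x \<partial>lebesgue)"
    using gm[OF mm(1)] gm[OF mm(2)] by (simp add: nn_integral_add)
  also have "\<dots> = (\<integral>\<^sup>+x. g u x + g v x \<partial>lebesgue)" by (simp add: pg)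
  also have "\<dots> = integral\<^sup>N lebesgue (g u) + integral\<^sup>N lebesgue (g v)"
    using gm[OF u_meas] gm[OF v_meas] by (simp add: nn_integral_add)
  finally have I2: "integral\<^sup>N lebesgue (g (\<lambda>x. min (u x) (v x))) + integral\<^sup>N lebesgue (g (\<lambda>x. max (u x) (v x)))
      = integral\<^sup>N lebesgue (g u) + integral\<^sup>N lebesgue (g v)" .
  show ?thesis unfolding E using add_mono[OF I1 eq_refl[OF I2]] by (simp add: ac_simps)
qed

end
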